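(* Let $x_1,\dots,x_m$, $y_1,\dots,y_m$, $z_1,\dots,z_m$, $t_1,t_3$ be indeterminates and let $S_m$ act by permuting $x_1,\dots,x_m$ only. Then $$\sum_{w\in S_m}w\left(\frac{\prod_{j\ge2}(x_1-t_1y_j)\prod_{j\ge2}(z_1-t_3x_j)}{\prod_{j\ge2}(x_1-x_j)}\right)=(m-1)!\prod_{j\ge2}(z_1-t_1t_3y_j),$$ where all products run over $2\le j\le m$. *)

theory Defs
  imports "HOL-Combinatorics.Permutations"
begin

end

theory Submission
  imports Defs "HOL-Computational_Algebra.Polynomial"
begin

lemma lagrange_poly:
  fixes x a :: "nat \<Rightarrow> 'a::field"
  assumes fI: "finite I" and inj: "inj_on x I" and cI: "card I = Suc n"
    and fJ: "finite J" and cJ: "card J = n"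
  shows "(\<Sum>i\<in>I. smult ((\<Prod>j\<in>J. (x i - a j)) / (\<Prod>k\<in>I-{i}. (x i - x k)))
              (\<Prod>k\<in>I-{i}. [:-x k, 1:])) = (\<Prod>j\<in>J. [:-a j, 1:])"
    (is "?L = ?R")
proof (rule poly_eqI_degree[where A="x ` I"])
  fix u assume "u \<in> x ` I"
  then obtain l where l: "l \<in> I" "u = x l" by auto
  have z: "(\<Prod>k\<in>I-{i}. (x l - x k)) = 0" if "i \<in> I" "i \<noteq> l" for i
    using l that fI by (intro prod_zero) auto
  have nz: "(\<Prod>k\<in>I-{l}. (x l - x k)) \<noteq> 0"
    using fI inj l by (auto simp: prod_zero_iff inj_on_def)
  have "poly ?L u = (\<Sum>i\<in>I. (\<Prod>j\<in>J. (x i - a j)) / (\<Prod>k\<in>I-{i}. (x i - x k))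
              * (\<Prod>k\<in>I-{i}. (x l - x k)))"
    using l by (simp add: poly_sum poly_prod)
  also have "\<dots> = (\<Prod>j\<in>J. (x l - a j)) / (\<Prod>k\<in>I-{l}. (x l - x k))
              * (\<Prod>k\<in>I-{l}. (x l - x k))"
    using l fI z by (subst sum.remove[of _ l]) (auto intro!: sum.neutral)
  also have "\<dots> = (\<Prod>j\<in>J. (x l - a j))" using nz by simp
  also have "\<dots> = poly ?R u" using l by (simp add: poly_prod)
  finally show "poly ?L u = poly ?R u" .
next
  have ci: "card (x ` I) = Suc n" using card_image[OF inj] cI by simp
  have "degree ?L \<le> n"
  proof (rule degree_sum_le)
    fix i assume "i \<in> I"
    have "degree (\<Prod>k\<in>I-{i}. [:-x k, 1:]) \<le> (\<Sum>k\<in>I-{i}. degree [:-x k, (1::'a):])"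
      using degree_prod_sum_le[of "I-{i}" "\<lambda>k. [:-x k, (1::'a):]"] fI by (simp add: o_def)
    also have "\<dots> = card (I - {i})" by simp
    also have "\<dots> = n" using \<open>i\<in>I\<close> cI fI by simp
    finally show "degree (smult ((\<Prod>j\<in>J. (x i - a j)) / (\<Prod>k\<in>I-{i}. (x i - x k)))
              (\<Prod>k\<in>I-{i}. [:-x k, 1:])) \<le> n"
      using degree_smult_le order_trans by blast
  qed (simp add: fI)
  then show "degree ?L < card (x ` I)" using ci by simp
  have "degree ?R \<le> (\<Sum>j\<in>J. degree [:-a j, (1::'a):])"
    using degree_prod_sum_le[of J "\<lambda>j. [:-a j, (1::'a):]"] fJ by (simp add: o_def)
  also have "\<dots> = n" using cJ by simp
  finally show "degree ?R < card (x ` I)" using ci by simp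
qed

lemma lagrange_hom:
  fixes x a :: "nat \<Rightarrow> 'a::field"
  assumes fI: "finite I" and inj: "inj_on x I" and cI: "card I = Suc n"
    and fJ: "finite J" and cJ: "card J = n"
  shows "(\<Sum>i\<in>I. (\<Prod>j\<in>J. (x i - a j)) * (\<Prod>k\<in>I-{i}. (z - t * x k))
              / (\<Prod>k\<in>I-{i}. (x i - x k))) = (\<Prod>j\<in>J. (z - t * a j))"
proof -
  define c where "c i = (\<Prod>j\<in>J. (x i - a j)) / (\<Prod>k\<in>I-{i}. (x i - x k))" for i
  have id: "(\<Sum>i\<in>I. smult (c i) (\<Prod>k\<in>I-{i}. [:-x k, 1:])) = (\<Prod>j\<in>J. [:-a j, 1:])"
    unfolding c_def by (rule lagrange_poly[OF assms])
  have cd: "card (I - {i}) = n" if "i \<in> I" for i using that cI fI by simp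
  have lhs: "(\<Sum>i\<in>I. (\<Prod>j\<in>J. (x i - a j)) * (\<Prod>k\<in>I-{i}. (z - t * x k))
              / (\<Prod>k\<in>I-{i}. (x i - x k))) = (\<Sum>i\<in>I. c i * (\<Prod>k\<in>I-{i}. (z - t * x k)))"
    unfolding c_def by (simp add: field_simps)
  show ?thesis
  proof (cases "t = 0")
    case True
    have "coeff (\<Sum>i\<in>I. smult (c i) (\<Prod>k\<in>I-{i}. [:-x k, 1:])) n = (\<Sum>i\<in>I. c i)"
    proof -
      have "coeff (\<Prod>k\<in>I-{i}. [:-x k, 1:]) n = 1" if "i \<in> I" for i
      proof -
        have d: "degree (\<Prod>k\<in>I-{i}. [:-x k, (1::'a):]) = n"
          using cd[OF that] by (subst degree_prod_eq_sum_degree) auto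
        have "lead_coeff (\<Prod>k\<in>I-{i}. [:-x k, (1::'a):]) = 1"
          by (simp add: lead_coeff_prod)
        thus ?thesis using d by simp
      qed
      thus ?thesis by (simp add: coeff_sum)
    qed
    moreover have "coeff (\<Prod>j\<in>J. [:-a j, (1::'a):]) n = 1"
    proof -
      have d: "degree (\<Prod>j\<in>J. [:-a j, (1::'a):]) = n"
        using cJ by (subst degree_prod_eq_sum_degree) auto
      have "lead_coeff (\<Prod>j\<in>J. [:-a j, (1::'a):]) = 1"
        by (simp add: lead_coeff_prod)
      thus ?thesis using d by simp
    qed
    ultimately have s1: "(\<Sum>i\<in>I. c i) = 1" using id by simp
    have "(\<Sum>i\<in>I. c i * (\<Prod>k\<in>I-{i}. (z - t * x k))) = (\<Sum>i\<in>I. c i * z ^ n)"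
      using True cd by (intro sum.cong) auto
    also have "\<dots> = z ^ n" using s1 by (simp add: sum_distrib_right[symmetric])
    also have "\<dots> = (\<Prod>j\<in>J. (z - t * a j))" using True cJ by simp
    finally show ?thesis using lhs by simp
  next
    case False
    have p: "poly (\<Sum>i\<in>I. smult (c i) (\<Prod>k\<in>I-{i}. [:-x k, 1:])) (z/t)
           = poly (\<Prod>j\<in>J. [:-a j, 1:]) (z/t)" using id by simp
    have e1: "t ^ n * (\<Prod>k\<in>K. (z/t - x k)) = (\<Prod>k\<in>K. (z - t * x k))"
      if "card K = n" for K and x :: "nat \<Rightarrow> 'a"
    proof -
      have "t ^ n * (\<Prod>k\<in>K. (z/t - x k)) = (\<Prod>k\<in>K. t * (z/t - x k))"
      proof (cases "finite K")
        case True thus ?thesis using that by (simp add: prod.distrib)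
      next
        case False thus ?thesis using that by simp
      qed
      also have "\<dots> = (\<Prod>k\<in>K. (z - t * x k))" using False
        by (intro prod.cong) (auto simp: field_simps)
      finally show ?thesis .
    qed
    have "(\<Sum>i\<in>I. c i * (\<Prod>k\<in>I-{i}. (z - t * x k)))
        = t ^ n * (\<Sum>i\<in>I. c i * (\<Prod>k\<in>I-{i}. (z/t - x k)))"
      by (simp add: sum_distrib_left e1[OF cd, symmetric] mult_ac cong: sum.cong)
    also have "\<dots> = t ^ n * (\<Prod>j\<in>J. (z/t - a j))"
      using p by (simp add: poly_sum poly_prod)
    also have "\<dots> = (\<Prod>j\<in>J. (z - t * a j))"
      using e1[OF cJ, of a] by simp
    finally show ?thesis using lhs by simp
  qed
qed

theorem lemma5p7:
  fixes x y z :: "nat \<Rightarrow> 'a::field" and t1 t3 :: 'a and m :: nat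
  assumes "m \<ge> 1"
    and "inj_on x {1..m}"
  shows "(\<Sum>w | w permutes {1..m}.
            (\<Prod>j\<in>{2..m}. (x (w 1) - t1 * y j)) * (\<Prod>j\<in>{2..m}. (z 1 - t3 * x (w j)))
            / (\<Prod>j\<in>{2..m}. (x (w 1) - x (w j))))
         = of_nat (fact (m - 1)) * (\<Prod>j\<in>{2..m}. (z 1 - t1 * t3 * y j))"
proof -
  define S where "S = {2..m}"
  have I: "{1..m} = insert 1 S" using assms(1) by (auto simp: S_def)
  have fS: "finite S" and nS: "1 \<notin> S" by (auto simp: S_def)
  have cS: "card S = m - 1" by (simp add: S_def)
  define g where "g b = (\<Prod>j\<in>S. (x b - t1 * y j)) * (\<Prod>k\<in>insert 1 S-{b}. (z 1 - t3 * x k))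
              / (\<Prod>k\<in>insert 1 S-{b}. (x b - x k))" for b
  have step1: "(\<Prod>j\<in>{2..m}. (x (w 1) - t1 * y j)) * (\<Prod>j\<in>{2..m}. (z 1 - t3 * x (w j)))
            / (\<Prod>j\<in>{2..m}. (x (w 1) - x (w j))) = g (w 1)" if w: "w permutes insert 1 S" for w
  proof -
    have inj: "inj_on w S" using permutes_inj[OF w] by (auto intro: inj_on_subset)
    have im: "w ` S = insert 1 S - {w 1}"
    proof -
      have "w ` insert 1 S = insert 1 S" using permutes_image[OF w] .
      moreover have "w 1 \<notin> w ` S"
      proof
        assume "w 1 \<in> w ` S"
        then obtain j where "j \<in> S" "w j = w 1" by auto
        then have "j = 1" using permutes_inj[OF w] by (auto simp: inj_def)
        thus False using nS \<open>j \<in> S\<close> by simp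
      qed
      ultimately show ?thesis by (metis Diff_insert_absorb image_insert)
    qed
    have a: "(\<Prod>j\<in>S. h (w j)) = (\<Prod>k\<in>insert 1 S - {w 1}. h k)" for h :: "nat \<Rightarrow> 'a"
      using prod.reindex[OF inj, of h] im by simp
    show ?thesis unfolding g_def S_def[symmetric] a[of "\<lambda>k. z 1 - t3 * x k"]
        a[of "\<lambda>k. x (w 1) - x k"] ..
  qed
  have "(\<Sum>w | w permutes {1..m}.
            (\<Prod>j\<in>{2..m}. (x (w 1) - t1 * y j)) * (\<Prod>j\<in>{2..m}. (z 1 - t3 * x (w j)))
            / (\<Prod>j\<in>{2..m}. (x (w 1) - x (w j))))
       = (\<Sum>w | w permutes insert 1 S. g (w 1))"
    unfolding I
  proof (rule sum.cong[OF refl])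
    fix w assume "w \<in> {w. w permutes insert 1 S}"
    then show "(\<Prod>j\<in>{2..m}. (x (w 1) - t1 * y j)) * (\<Prod>j\<in>{2..m}. (z 1 - t3 * x (w j)))
            / (\<Prod>j\<in>{2..m}. (x (w 1) - x (w j))) = g (w 1)" using step1 by blast
  qed
  also have "\<dots> = (\<Sum>b\<in>insert 1 S. \<Sum>q | q permutes S. g ((transpose 1 b \<circ> q) 1))"
    by (rule sum_over_permutations_insert[OF fS nS])
  also have "\<dots> = (\<Sum>b\<in>insert 1 S. \<Sum>q | q permutes S. g b)"
    using nS by (intro sum.cong refl) (auto simp: permutes_not_in)
  also have "\<dots> = (\<Sum>b\<in>insert 1 S. of_nat (fact (m - 1)) * g b)"
    using card_permutations[OF cS fS] by simp
  also have "\<dots> = of_nat (fact (m - 1)) * (\<Sum>b\<in>insert 1 S. g b)"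
    by (simp add: sum_distrib_left)
  also have "(\<Sum>b\<in>insert 1 S. g b) = (\<Prod>j\<in>S. (z 1 - t3 * (t1 * y j)))"
    unfolding g_def
    by (rule lagrange_hom[of "insert 1 S" x "m - 1" S "\<lambda>j. t1 * y j"])
       (use fS nS cS assms I in auto)
  finally show ?thesis by (simp add: S_def mult_ac)
qed

end
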